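(* Assume $$\lim_{h\to0}\frac{C_1\kappa\,h^{-1/2}}{\big(\Delta^{-1}(C_1h^{-1/2})\big)^2}=\infty .$$ Then there are constants $C_1,C_2>0$, depending on the perturbation $H$ and on $\kappa$ but not on $t$ or $h$, such that for all sufficiently small $h$, all $t\in(0,t_0)$ and all distinct $m,m'\in\mathbb Z^d$ with $I_m,I_{m'}\in D$, $m\in\mathcal M_h(t)$ and $|I_m-I_{m'}|\le h\,\Delta^{-1}(C_1h^{-1/2})$, one has $$|\mu_m-\mu_{m'}|\ge C_2h^{3/2}.$$
   Context: Setting: $D\subset\mathbb R^d$ a bounded convex domain of actions; $K^0(I;t,h)=\sum_{0\le j}K_j(I;t)h^j$ is the real-valued integrable part of the quantum Birkhoff normal form of $P_h(t)$, with $K_j$ smooth with derivatives bounded uniformly in $t\in(0,t_0)$, and $K_0(I;t)$ is the integrable part of the Birkhoff normal form of the classical Hamiltonian. $\Delta$ is a $\sigma$-approximation function (continuous, strictly increasing, unbounded, $\log\Delta(s)/s^{1/\sigma}\searrow0$, $\int_\varsigma^\infty\log\Delta(s)s^{-1-1/\sigma}ds<\infty$), $\Delta^{-1}$ its inverse. $E_\kappa(t)\subset D$ is the set of actions $I$ with $\omega=\nabla_IK_0(I;t)$ satisfying $|\langle\omega,k\rangle|\ge\kappa/\Delta(|k|)$ for all $k\in\mathbb Z^d\setminus\{0\}$. $I_m=h(m+\vartheta/4)$ for $m\in\mathbb Z^d$, $\vartheta$ the Maslov class of the tori; $\mathcal M_h(t)=\{m\in\mathbb Z^d:\operatorname{dist}(E_\kappa(t),h(m+\vartheta/4))\le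 Lh\}$ for a fixed $L>0$; quasi-eigenvalues $\mu_m=\mu_m(t;h)=K^0(I_m;t,h)$. *)

theory Defs
  imports "HOL-Analysis.Analysis"
begin

definition sigma_approx :: "real \<Rightarrow> (real \<Rightarrow> real) \<Rightarrow> bool" where
  "sigma_approx \<sigma> \<Delta> \<longleftrightarrow>
     \<sigma> > 0 \<and> continuous_on {0..} \<Delta> \<and> strict_mono_on {0..} \<Delta> \<and>
     (\<forall>s\<ge>0. \<Delta> s > 0) \<and> filterlim \<Delta> at_top at_top \<and>
     (\<exists>vs>0. antimono_on {vs..} (\<lambda>s. ln (\<Delta> s) / s powr (1/\<sigma>)) \<and>
        ((\<lambda>s. ln (\<Delta> s) / s powr (1/\<sigma>)) \<longlongrightarrow> 0) at_top \<and>
        (\<lambda>s. ln (\<Delta> s) * s powr (-1 - 1/\<sigma>)) integrable_on {vs..})"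

definition approx_inv :: "(real \<Rightarrow> real) \<Rightarrow> real \<Rightarrow> real" where
  "approx_inv \<Delta> y = inv_into {0..} \<Delta> y"

definition rvec :: "int^'n \<Rightarrow> real^'n" where
  "rvec k = (\<chi> i. real_of_int (k $ i))"

definition nonres_set :: "(real^'n \<Rightarrow> real^'n) \<Rightarrow> (real \<Rightarrow> real) \<Rightarrow> real \<Rightarrow> (real^'n) set \<Rightarrow> (real^'n) set" where
  "nonres_set \<omega> \<Delta> \<kappa> D =
     {I \<in> D. \<forall>k::int^'n. k \<noteq> 0 \<longrightarrow> \<bar>\<omega> I \<bullet> rvec k\<bar> \<ge> \<kappa> / \<Delta> (norm (rvec k))}"

definition quant_act :: "real \<Rightarrow> int^'n \<Rightarrow> int^'n \<Rightarrow> real^'n" where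
  "quant_act h \<theta> m = h *\<^sub>R (\<chi> i. real_of_int (m $ i) + real_of_int (\<theta> $ i) / 4)"

text \<open>M_h(t) = {m. dist(E, I_m) \<le> L h}; empty if E is empty (dist = +inf).\<close>
definition Mset :: "(real^'n) set \<Rightarrow> real \<Rightarrow> real \<Rightarrow> int^'n \<Rightarrow> (int^'n) set" where
  "Mset E L h \<theta> = {m. E \<noteq> {} \<and> infdist (quant_act h \<theta> m) E \<le> L * h}"

end

theory Submission
  imports Defs
begin


lemma infdist_lt_obtain:
  fixes x :: "'a::metric_space"
  assumes "A \<noteq> {}" "infdist x A < r"
  obtains a where "a \<in> A" "dist x a < r"
proof -
  have "bdd_below ((\<lambda>a. dist x a) ` A)" by (rule bdd_belowI[of _ 0]) auto
  with assms have "\<exists>a\<in>A. dist x a < r" by (simp add: infdist_notempty cINF_less_iff)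
  with that show ?thesis by blast
qed

lemma approx_inv_props:
  assumes "sigma_approx \<sigma> \<Delta>" "y \<ge> \<Delta> 0"
  shows "approx_inv \<Delta> y \<ge> 0 \<and> \<Delta> (approx_inv \<Delta> y) = y"
proof -
  from assms(1) have cont: "continuous_on {0..} \<Delta>" and lim: "filterlim \<Delta> at_top at_top"
    by (auto simp: sigma_approx_def)
  from lim have "\<forall>\<^sub>F s in at_top. \<Delta> s \<ge> y" by (simp add: filterlim_at_top)
  moreover have "\<forall>\<^sub>F s in at_top. s \<ge> (0::real)" by (rule eventually_ge_at_top)
  ultimately have "\<exists>s. \<Delta> s \<ge> y \<and> s \<ge> 0" by (metis (mono_tags) eventually_conj eventually_happens' trivial_limit_at_top_linorder)
  then obtain b where b: "\<Delta> b \<ge> y" "b \<ge> 0" by blast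
  have "continuous_on {0..b} \<Delta>" using cont by (rule continuous_on_subset) auto
  from IVT'[OF assms(2) b(1) b(2) this] obtain x where x: "0 \<le> x" "\<Delta> x = y" by blast
  hence "y \<in> \<Delta> ` {0..}" by auto
  thus ?thesis unfolding approx_inv_def
    by (metis atLeast_iff f_inv_into_f inv_into_into)
qed

lemma core:
  fixes f0 f1 F :: "real^'n \<Rightarrow> real" and g0 g1 :: "real^'n \<Rightarrow> real^'n"
  assumes cvx: "convex D" and aD: "a \<in> D" and bD: "b \<in> D" and ID: "I \<in> D"
    and d0: "\<And>x. x \<in> D \<Longrightarrow> (f0 has_derivative (\<lambda>v. g0 x \<bullet> v)) (at x)"
    and lip: "\<And>x. x \<in> D \<Longrightarrow> norm (g0 x - g0 I) \<le> B0 * dist x I"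
    and d1: "\<And>x. x \<in> D \<Longrightarrow> (f1 has_derivative (\<lambda>v. g1 x \<bullet> v)) (at x)"
    and g1b: "\<And>x. x \<in> D \<Longrightarrow> norm (g1 x) \<le> B1"
    and apa: "\<bar>F a - (f0 a + h * f1 a)\<bar> \<le> C * h^2"
    and apb: "\<bar>F b - (f0 b + h * f1 b)\<bar> \<le> C * h^2"
    and nr: "\<bar>g0 I \<bullet> (a - b)\<bar> \<ge> R"
    and daI: "dist a I \<le> \<delta>" and h: "h > 0" and B0: "B0 \<ge> 0"
  shows "\<bar>F a - F b\<bar> \<ge> R - B0 * (norm (a - b) + \<delta>) * norm (a - b) - h * B1 * norm (a - b) - 2 * C * h^2"
proof -
  define S where "S = closed_segment a b"
  have SD: "S \<subseteq> D" unfolding S_def using closed_segment_subset[OF aD bD cvx] .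
  define g where "g x = f0 x - g0 I \<bullet> x" for x
  have gd: "(g has_derivative (\<lambda>v. (g0 x - g0 I) \<bullet> v)) (at x within S)" if "x \<in> S" for x
  proof -
    have "(g has_derivative (\<lambda>v. g0 x \<bullet> v - g0 I \<bullet> v)) (at x)"
      unfolding g_def using d0[of x] SD that
      by (auto intro!: derivative_eq_intros)
    thus ?thesis by (auto simp: inner_diff_left intro: has_derivative_at_withinI)
  qed
  have gb: "onorm (\<lambda>v. (g0 x - g0 I) \<bullet> v) \<le> B0 * (norm (a - b) + \<delta>)" if "x \<in> S" for x
  proof -
    have "dist x I \<le> dist x a + dist a I" by (rule dist_triangle)
    also have "dist x a \<le> norm (a - b)" using dist_in_closed_segment[of x a b] that
      by (simp add: S_def dist_norm)
    finally have "dist x I \<le> norm (a - b) + \<delta>" using daI by linarith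
    hence n: "norm (g0 x - g0 I) \<le> B0 * (norm (a - b) + \<delta>)"
      using lip[of x] SD that B0 by (meson mult_left_mono order_trans subsetD)
    have "0 \<le> norm (g0 x - g0 I)" by simp
    show ?thesis
    proof (rule onorm_bound)
      show "0 \<le> B0 * (norm (a - b) + \<delta>)" using n norm_ge_zero[of "g0 x - g0 I"] by linarith
      fix v show "norm ((g0 x - g0 I) \<bullet> v) \<le> B0 * (norm (a - b) + \<delta>) * norm v"
        using Cauchy_Schwarz_ineq2[of "g0 x - g0 I" v] n
        by (simp add: mult_right_mono order_trans)
    qed
  qed
  have "norm (g a - g b) \<le> B0 * (norm (a - b) + \<delta>) * norm (a - b)"
    using differentiable_bound[OF convex_closed_segment[of a b, folded S_def] gd gb]
    by (simp add: S_def)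
  hence e0: "\<bar>f0 a - f0 b - g0 I \<bullet> (a - b)\<bar> \<le> B0 * (norm (a - b) + \<delta>) * norm (a - b)"
    by (simp add: g_def inner_diff_right algebra_simps)
  have f1d: "(f1 has_derivative (\<lambda>v. g1 x \<bullet> v)) (at x within D)" if "x \<in> D" for x
    using d1[OF that] by (rule has_derivative_at_withinI)
  have f1b: "onorm (\<lambda>v. g1 x \<bullet> v) \<le> B1" if "x \<in> D" for x
  proof (rule onorm_bound)
    show "0 \<le> B1" using g1b[OF that] norm_ge_zero[of "g1 x"] by linarith
    fix v show "norm (g1 x \<bullet> v) \<le> B1 * norm v"
      using Cauchy_Schwarz_ineq2[of "g1 x" v] g1b[OF that]
      by (simp add: mult_right_mono order_trans)
  qed
  have e1: "\<bar>f1 a - f1 b\<bar> \<le> B1 * norm (a - b)"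
    using differentiable_bound[OF cvx f1d f1b aD bD] by simp
  have "\<bar>h * (f1 a - f1 b)\<bar> \<le> h * (B1 * norm (a - b))"
    using e1 h by (simp add: abs_mult)
  thus ?thesis using e0 nr apa apb by (simp add: algebra_simps)
qed


lemma arith_final:
  fixes h nk A B0 B1 C L \<kappa> y :: real
  assumes h: "h > 0" and nk: "nk \<ge> 1" "nk \<le> A" and pos: "B0 \<ge> 0" "B1 \<ge> 0" "C \<ge> 0" "L > 0" "\<kappa> > 0"
    and M: "M = B0 * (2 + L) + B1 + 2 * C + 1"
    and rat: "\<kappa> * y / A\<^sup>2 \<ge> 2 * M" and y: "y = h powr (-1/2)"
  shows "h * (\<kappa> / y) - B0 * (h * nk + (L + 1) * h) * (h * nk) - h * B1 * (h * nk) - 2 * C * h^2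
         \<ge> \<kappa> / 2 * h powr (3/2)"
proof -
  have Mpos: "M > 0" using M pos using mult_nonneg_nonneg[of B0 "2+L"] by linarith
  have ypos: "y > 0" using y h by simp
  have A0: "A \<ge> 1" using nk by linarith
  have A2: "A^2 > 0" using A0 by simp
  have aM: "A^2 * M \<le> \<kappa> * y / 2" using rat A2 by (simp add: field_simps)
  have hy: "h^2 * y = h powr (3/2)"
  proof -
    have "h powr (3/2) = h powr (2 + (-1/2))" by simp
    also have "\<dots> = h powr 2 * h powr (-1/2)" by (rule powr_add)
    also have "h powr 2 = h^2" using h by (simp add: powr_numeral)
    finally show ?thesis by (simp add: y)
  qed
  have hy2: "h * (\<kappa> / y) = \<kappa> * h powr (3/2)"
  proof -
    have "h powr (3/2) * y = h powr (3/2 + (-1/2))" unfolding y by (rule powr_add[symmetric])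
    also have "\<dots> = h" using h by simp
    finally have "h powr (3/2) * y = h" .
    thus ?thesis using ypos by (simp add: field_simps)
  qed
  have nk2: "nk \<le> nk^2" using nk by (simp add: power2_eq_square)
  have e1: "B0 * (h * nk + (L + 1) * h) * (h * nk) \<le> B0 * (2 + L) * (h^2 * nk^2)"
  proof -
    have "(L + 1) * h * 1 \<le> (L + 1) * h * nk" using nk h pos by (intro mult_left_mono) auto
    hence "h * nk + (L + 1) * h \<le> (2 + L) * h * nk" by (simp add: algebra_simps)
    hence "(h * nk + (L + 1) * h) * (h * nk) \<le> (2 + L) * h * nk * (h * nk)"
      using h nk by (intro mult_right_mono) auto
    hence "B0 * ((h * nk + (L + 1) * h) * (h * nk)) \<le> B0 * ((2 + L) * h * nk * (h * nk))"
      using pos by (intro mult_left_mono) auto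
    also have "B0 * ((2 + L) * h * nk * (h * nk)) = B0 * (2 + L) * (h^2 * nk^2)"
      by (simp add: power2_eq_square algebra_simps)
    finally show ?thesis by (simp add: algebra_simps)
  qed
  have e2: "h * B1 * (h * nk) \<le> B1 * (h^2 * nk^2)"
    using nk2 h pos by (simp add: power2_eq_square mult_left_mono algebra_simps)
  have e3: "2 * C * h^2 \<le> 2 * C * (h^2 * nk^2)"
  proof -
    have "1 \<le> nk^2" using nk by (simp add: one_le_power)
    hence "h^2 * 1 \<le> h^2 * nk^2" by (intro mult_left_mono) auto
    from mult_left_mono[OF this, of "2 * C"] pos show ?thesis by simp
  qed
  have "B0 * (2 + L) * (h^2 * nk^2) + B1 * (h^2 * nk^2) + 2 * C * (h^2 * nk^2) \<le> M * (h^2 * nk^2)"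
    using M h by (simp add: algebra_simps)
  also have "\<dots> \<le> M * (h^2 * A^2)"
    using Mpos h nk by (intro mult_left_mono mult_left_mono power_mono) auto
  also have "\<dots> = h^2 * (A^2 * M)" by simp
  also have "\<dots> \<le> h^2 * (\<kappa> * y / 2)" using aM h by (intro mult_left_mono) auto
  also have "\<dots> = \<kappa> / 2 * h powr (3/2)" using hy by (simp add: algebra_simps)
  finally have fin: "B0 * (2 + L) * (h^2 * nk^2) + B1 * (h^2 * nk^2) + 2 * C * (h^2 * nk^2) \<le> \<kappa> / 2 * h powr (3/2)" .
  have half: "\<kappa> / 2 * h powr (3/2) = (\<kappa> * h powr (3/2)) / 2" by simp
  define P where "P = h * (\<kappa> / y)"
  define Q1 where "Q1 = B0 * (h * nk + (L + 1) * h) * (h * nk)"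
  define Q2 where "Q2 = h * B1 * (h * nk)"
  define Q3 where "Q3 = 2 * C * h^2"
  define R1 where "R1 = B0 * (2 + L) * (h^2 * nk^2)"
  define R2 where "R2 = B1 * (h^2 * nk^2)"
  define R3 where "R3 = 2 * C * (h^2 * nk^2)"
  define T where "T = h powr (3/2)"
  have "R1 + R2 + R3 \<le> \<kappa> / 2 * T" "Q1 \<le> R1" "Q2 \<le> R2" "Q3 \<le> R3" "P = \<kappa> * T"
    using fin e1 e2 e3 hy2 unfolding P_def Q1_def Q2_def Q3_def R1_def R2_def R3_def T_def by auto
  hence "\<kappa> / 2 * T \<le> P - Q1 - Q2 - Q3" by (simp add: field_simps)
  thus ?thesis unfolding P_def Q1_def Q2_def Q3_def T_def .
qed


lemma lim_powr_half: "filterlim (\<lambda>h::real. h powr (-1/2)) at_top (at_right 0)"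
proof -
  have s: "filterlim sqrt (at_right 0) (at_right (0::real))"
    unfolding filterlim_at
  proof (intro conjI)
    show "\<forall>\<^sub>F x in at_right (0::real). sqrt x \<in> {0<..} \<and> sqrt x \<noteq> 0"
      by (rule eventually_mono[OF eventually_at_right_less]) auto
    show "(sqrt \<longlongrightarrow> 0) (at_right (0::real))"
      using tendsto_real_sqrt[OF tendsto_ident_at[of 0 "{0<..}"]] by simp
  qed
  have L: "filterlim (\<lambda>h::real. inverse (sqrt h)) at_top (at_right 0)"
    by (rule filterlim_compose[OF filterlim_inverse_at_top_right s])
  have E: "\<forall>\<^sub>F h in at_right (0::real). inverse (sqrt h) = h powr (-1/2)"
    by (simp add: eventually_at_right_less powr_minus powr_half_sqrt eventually_mono[OF eventually_at_right_less] )
  show ?thesis using iffD1[OF filterlim_cong[OF refl refl E] L] .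
qed

theorem proposition4p1:
  fixes D :: "(real^'n) set"
    and K :: "nat \<Rightarrow> real \<Rightarrow> real^'n \<Rightarrow> real"
    and gradK :: "nat \<Rightarrow> real \<Rightarrow> real^'n \<Rightarrow> real^'n"
    and Kq :: "real \<Rightarrow> real \<Rightarrow> real^'n \<Rightarrow> real"
    and gradKq :: "real \<Rightarrow> real \<Rightarrow> real^'n \<Rightarrow> real^'n"
    and \<Delta> :: "real \<Rightarrow> real"
    and \<sigma> \<kappa> L t0 :: real
    and \<theta> :: "int^'n"
  assumes D: "open D" "bounded D" "convex D"
    and t0: "t0 > 0" and \<kappa>: "\<kappa> > 0" and L: "L > 0"
    and \<Delta>: "sigma_approx \<sigma> \<Delta>"
    and Kj_deriv: "\<And>j t I. t \<in> {0<..<t0} \<Longrightarrow> I \<in> D \<Longrightarrow>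
                     (K j t has_derivative (\<lambda>v. gradK j t I \<bullet> v)) (at I)"
    and Kj_bounds: "\<And>j. \<exists>B. \<forall>t\<in>{0<..<t0}. \<forall>I\<in>D. \<bar>K j t I\<bar> \<le> B \<and> norm (gradK j t I) \<le> B \<and>
                     (\<forall>J\<in>D. norm (gradK j t I - gradK j t J) \<le> B * dist I J)"
    and Kq_deriv: "\<And>t h I. t \<in> {0<..<t0} \<Longrightarrow> h > 0 \<Longrightarrow> I \<in> D \<Longrightarrow>
                     (Kq t h has_derivative (\<lambda>v. gradKq t h I \<bullet> v)) (at I)"
    and Kq_asymp: "\<And>N. \<exists>C h0. h0 > 0 \<and> (\<forall>t\<in>{0<..<t0}. \<forall>h\<in>{0<..<h0}. \<forall>I\<in>D.
                     \<bar>Kq t h I - (\<Sum>j<N. h ^ j * K j t I)\<bar> \<le> C * h ^ N \<and>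
                     norm (gradKq t h I - (\<Sum>j<N. h ^ j *\<^sub>R gradK j t I)) \<le> C * h ^ N)"
    and hyp: "\<And>C1. C1 > 0 \<Longrightarrow>
               filterlim (\<lambda>h. C1 * \<kappa> * h powr (-1/2) / (approx_inv \<Delta> (C1 * h powr (-1/2)))\<^sup>2)
                 at_top (at_right 0)"
  shows "\<exists>C1>0. \<exists>C2>0. \<forall>\<^sub>F h in at_right 0. \<forall>t\<in>{0<..<t0}. \<forall>m m'.
           m \<noteq> m' \<and> quant_act h \<theta> m \<in> D \<and> quant_act h \<theta> m' \<in> D \<and>
           m \<in> Mset (nonres_set (gradK 0 t) \<Delta> \<kappa> D) L h \<theta> \<and>
           norm (quant_act h \<theta> m - quant_act h \<theta> m') \<le> h * approx_inv \<Delta> (C1 * h powr (-1/2))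
           \<longrightarrow> \<bar>Kq t h (quant_act h \<theta> m) - Kq t h (quant_act h \<theta> m')\<bar> \<ge> C2 * h powr (3/2)"
  proof -
  obtain C h0 where Ch0: "h0 > 0" and Cb: "\<And>t h I. t\<in>{0<..<t0} \<Longrightarrow> h\<in>{0<..<h0} \<Longrightarrow> I\<in>D \<Longrightarrow>
      \<bar>Kq t h I - (\<Sum>j<2. h ^ j * K j t I)\<bar> \<le> C * h ^ 2"
    using Kq_asymp[of 2] by blast
  obtain B0 where B0: "\<And>t I J. t\<in>{0<..<t0} \<Longrightarrow> I\<in>D \<Longrightarrow> J\<in>D \<Longrightarrow> norm (gradK 0 t I - gradK 0 t J) \<le> B0 * dist I J"
    using Kj_bounds[of 0] by blast
  obtain B1 where B1: "\<And>t I. t\<in>{0<..<t0} \<Longrightarrow> I\<in>D \<Longrightarrow> norm (gradK 1 t I) \<le> B1"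
    using Kj_bounds[of 1] by blast
  define M where "M = \<bar>B0\<bar> * (2 + L) + \<bar>B1\<bar> + 2 * \<bar>C\<bar> + 1"
  have lim1: "filterlim (\<lambda>h::real. h powr (-1/2)) at_top (at_right 0)" by (rule lim_powr_half)
  have ev1: "\<forall>\<^sub>F h in at_right 0. h powr (-1/2) \<ge> \<Delta> 0"
    using lim1 by (simp add: filterlim_at_top)
  have ev2: "\<forall>\<^sub>F h in at_right 0. \<kappa> * h powr (-1/2) / (approx_inv \<Delta> (h powr (-1/2)))\<^sup>2 \<ge> 2 * M"
    using hyp[of 1] by (simp add: filterlim_at_top)
  have ev3: "\<forall>\<^sub>F h in at_right (0::real). h < h0 \<and> h > 0"
    using Ch0 by (simp add: eventually_conj eventually_at_right_less eventually_at_right_field) (metis eventually_at_right_field)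
  have main: "\<forall>\<^sub>F h in at_right 0. \<forall>t\<in>{0<..<t0}. \<forall>m m'.
           m \<noteq> m' \<and> quant_act h \<theta> m \<in> D \<and> quant_act h \<theta> m' \<in> D \<and>
           m \<in> Mset (nonres_set (gradK 0 t) \<Delta> \<kappa> D) L h \<theta> \<and>
           norm (quant_act h \<theta> m - quant_act h \<theta> m') \<le> h * approx_inv \<Delta> (1 * h powr (-1/2))
           \<longrightarrow> \<bar>Kq t h (quant_act h \<theta> m) - Kq t h (quant_act h \<theta> m')\<bar> \<ge> \<kappa> / 2 * h powr (3/2)"
      using ev1 ev2 ev3
    proof eventually_elim
      case (elim h)
      from elim have hpos: "h > 0" "h < h0" and yD: "h powr (-1/2) \<ge> \<Delta> 0"
        and rat: "\<kappa> * h powr (-1/2) / (approx_inv \<Delta> (h powr (-1/2)))\<^sup>2 \<ge> 2 * M" by auto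
      define y where "y = h powr (-1/2)"
      define A where "A = approx_inv \<Delta> y"
      have Ap: "A \<ge> 0" "\<Delta> A = y" using approx_inv_props[OF \<Delta> yD] by (auto simp: A_def y_def)
      have ypos: "y > 0" using hpos by (simp add: y_def)
      have smono: "strict_mono_on {0..} \<Delta>" and Dpos: "\<And>s. s \<ge> 0 \<Longrightarrow> \<Delta> s > 0"
        using \<Delta> by (auto simp: sigma_approx_def)
      show ?case
      proof (intro ballI allI impI)
        fix t m m' assume t: "t \<in> {0<..<t0}" and H: "m \<noteq> m' \<and> quant_act h \<theta> m \<in> D \<and> quant_act h \<theta> m' \<in> D \<and>
           m \<in> Mset (nonres_set (gradK 0 t) \<Delta> \<kappa> D) L h \<theta> \<and>
           norm (quant_act h \<theta> m - quant_act h \<theta> m') \<le> h * approx_inv \<Delta> (1 * h powr (-1/2))"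
        define a where "a = quant_act h \<theta> m"
        define b where "b = quant_act h \<theta> m'"
        define k where "k = m - m'"
        define nk where "nk = norm (rvec k)"
        have aD: "a \<in> D" and bD: "b \<in> D" using H by (auto simp: a_def b_def)
        have k0: "k \<noteq> 0" using H by (simp add: k_def)
        have ab: "a - b = h *\<^sub>R rvec k"
          by (simp add: a_def b_def k_def quant_act_def rvec_def vec_eq_iff algebra_simps)
        have nab: "norm (a - b) = h * nk" using hpos by (simp add: ab nk_def)
        have nk1: "nk \<ge> 1"
        proof -
          from k0 obtain i where i: "k $ i \<noteq> 0" by (auto simp: vec_eq_iff)
          hence "1 \<le> \<bar>real_of_int (k $ i)\<bar>" by linarith
          also have "\<dots> = \<bar>rvec k $ i\<bar>" by (simp add: rvec_def)
          also have "\<dots> \<le> nk" unfolding nk_def by (rule component_le_norm_cart)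
          finally show ?thesis .
        qed
        have nkA: "nk \<le> A"
        proof -
          have "h * nk \<le> h * A" using H nab by (simp add: a_def b_def A_def y_def)
          thus ?thesis using hpos by simp
        qed
        define E where "E = nonres_set (gradK 0 t) \<Delta> \<kappa> D"
        have E0: "E \<noteq> {}" and infd: "infdist a E \<le> L * h"
          using H by (auto simp: Mset_def E_def a_def)
        have "infdist a E < (L + 1) * h" using infd hpos by (simp add: algebra_simps)
        then obtain I where IE: "I \<in> E" and daI: "dist a I < (L + 1) * h"
          using infdist_lt_obtain[OF E0] by blast
        have ID: "I \<in> D" and nrI: "\<bar>gradK 0 t I \<bullet> rvec k\<bar> \<ge> \<kappa> / \<Delta> (norm (rvec k))"
          using IE k0 by (auto simp: E_def nonres_set_def)
        have "\<Delta> nk \<le> \<Delta> A" using nk1 Ap nkA by (intro strict_mono_on_leD[OF smono]) auto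
        hence "\<kappa> / \<Delta> nk \<ge> \<kappa> / y" using Ap Dpos[of nk] nk1 \<kappa> by (intro divide_left_mono) auto
        hence nr1: "\<bar>gradK 0 t I \<bullet> rvec k\<bar> \<ge> \<kappa> / y" using nrI unfolding nk_def by linarith
        have nr: "\<bar>gradK 0 t I \<bullet> (a - b)\<bar> \<ge> h * (\<kappa> / y)"
          using mult_left_mono[OF nr1, of h] hpos by (simp add: ab abs_mult)
        have Cb': "\<bar>Kq t h x - (K 0 t x + h * K 1 t x)\<bar> \<le> \<bar>C\<bar> * h^2" if "x \<in> D" for x
        proof -
          have "\<bar>Kq t h x - (\<Sum>j<2. h ^ j * K j t x)\<bar> \<le> C * h ^ 2" using Cb[OF t _ that] hpos by auto
          moreover have "C * h^2 \<le> \<bar>C\<bar> * h^2" by (intro mult_right_mono) auto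
          ultimately show ?thesis by (simp add: numeral_2_eq_2)
        qed
        have lip: "norm (gradK 0 t x - gradK 0 t I) \<le> \<bar>B0\<bar> * dist x I" if "x \<in> D" for x
        proof -
          have "B0 * dist x I \<le> \<bar>B0\<bar> * dist x I" by (intro mult_right_mono) auto
          thus ?thesis using B0[OF t that ID] by linarith
        qed
        have g1b: "norm (gradK 1 t x) \<le> \<bar>B1\<bar>" if "x \<in> D" for x
          using B1[OF t that] by linarith
        have cr: "\<bar>Kq t h a - Kq t h b\<bar> \<ge> h * (\<kappa> / y) - \<bar>B0\<bar> * (norm (a - b) + (L + 1) * h) * norm (a - b)
                   - h * \<bar>B1\<bar> * norm (a - b) - 2 * \<bar>C\<bar> * h^2"
          by (rule core[OF D(3) aD bD ID Kj_deriv[OF t] lip Kj_deriv[OF t] g1b Cb'[OF aD] Cb'[OF bD] nr])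
             (use daI hpos in auto)
        have fin: "h * (\<kappa> / y) - \<bar>B0\<bar> * (h * nk + (L + 1) * h) * (h * nk) - h * \<bar>B1\<bar> * (h * nk) - 2 * \<bar>C\<bar> * h^2
         \<ge> \<kappa> / 2 * h powr (3/2)"
          by (rule arith_final[OF hpos(1) nk1 nkA _ _ _ L \<kappa> M_def])
             (use rat in \<open>auto simp: y_def A_def\<close>)
        show "\<bar>Kq t h (quant_act h \<theta> m) - Kq t h (quant_act h \<theta> m')\<bar> \<ge> \<kappa> / 2 * h powr (3/2)"
        proof -
          have "\<bar>Kq t h a - Kq t h b\<bar> \<ge> \<kappa> / 2 * h powr (3/2)" using cr fin unfolding nab by linarith
          thus ?thesis by (simp add: a_def b_def)
        qed
      qed
    qed
  have k2: "0 < \<kappa> / 2" using \<kappa> by simp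
  show ?thesis
    apply (rule exI[of _ 1])
    apply (rule conjI)
     apply (rule zero_less_one)
    apply (rule exI[of _ "\<kappa>/2"])
    apply (rule conjI)
     apply (rule k2)
    apply (rule main)
    done
qed

end
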